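(* For every non-empty finite binary word $w$, the vanishing order satisfies $n_\epsilon(w) \le 2\lfloor \log_2 |w| \rfloor + 2$, where $|w|$ is the length of $w$.
   Context: Binary words are finite or infinite sequences over $\{0,1\}$; $\epsilon$ denotes the empty word. Define the map $\rho$ on binary words as follows: for $b=b_1b_2\dots$, $\rho(b)$ is obtained from $b$ by deleting every digit $b_n=0$ and replacing every digit $b_n=1$ by $0$ if $n$ is odd and by $1$ if $n$ is even (positions are counted in the original word $b$). For a finite binary word $w$, its vanishing order is $n_\epsilon(w)=\min\{k>0 : \rho^k(w)=\epsilon\}$, where $\rho^k$ is the $k$-th iterate of $\rho$. *)

theory Defs
  imports Complex_Main
begin

(* Binary words as lists of booleans: True = digit 1, False = digit 0.
   rho_from p w: apply the rule to w whose first letter sits at a position of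
   parity p in the original word (p = True means odd position). *)
fun rho_from :: "bool \<Rightarrow> bool list \<Rightarrow> bool list" where
  "rho_from p [] = []"
| "rho_from p (b # bs) =
     (if b then (\<not> p) # rho_from (\<not> p) bs else rho_from (\<not> p) bs)"

(* positions are counted from 1, so the first digit is at an odd position:
   a 1 at an odd position becomes 0 (False), at an even position becomes 1 (True) *)
definition rho :: "bool list \<Rightarrow> bool list" where
  "rho w = rho_from True w"

definition vanishing_order :: "bool list \<Rightarrow> nat" where
  "vanishing_order w = (LEAST k. 0 < k \<and> (rho ^^ k) w = [])"

end

theory Submission
  imports Defs
begin

lemma len_rho_from: "length (rho_from p w) \<le> length w"
  by (induction w arbitrary: p) (auto simp: le_SucI)

lemma cnt_rho_from:
  "length (rho_from q (rho_from p w)) \<le> (if p then length w div 2 else (length w + 1) div 2)"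
proof (induction w arbitrary: p q)
  case Nil then show ?case by simp
next
  case (Cons b bs)
  have IH1: "length (rho_from (\<not> q) (rho_from (\<not> p) bs)) \<le> (if \<not> p then length bs div 2 else (length bs + 1) div 2)"
    using Cons.IH by blast
  have IH2: "length (rho_from q (rho_from (\<not> p) bs)) \<le> (if \<not> p then length bs div 2 else (length bs + 1) div 2)"
    using Cons.IH by blast
  show ?case
    using IH1 IH2 by (cases b; cases p; auto)
qed

lemma rho2: "length (rho (rho w)) \<le> length w div 2"
  using cnt_rho_from[of True True w] by (simp add: rho_def)

lemma iter: "length ((rho ^^ (2*k)) w) \<le> length w div 2^k"
proof (induction k)
  case 0 then show ?case by simp
next
  case (Suc k)
  have "(rho ^^ (2 * Suc k)) w = rho (rho ((rho ^^ (2*k)) w))"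
  proof -
    have "2 * Suc k = Suc (Suc (2*k))" by simp
    then show ?thesis by (simp only: funpow.simps(2) o_apply)
  qed
  then have "length ((rho ^^ (2 * Suc k)) w) \<le> length ((rho ^^ (2*k)) w) div 2"
    using rho2 by simp
  also have "\<dots> \<le> (length w div 2^k) div 2" using Suc div_le_mono by blast
  also have "\<dots> = length w div 2^Suc k" by (metis div_mult2_eq power_Suc2)
  finally show ?case .
qed

theorem proposition2p1:
  fixes w :: "bool list"
  assumes "w \<noteq> []"
  shows "(\<exists>k>0. (rho ^^ k) w = []) \<and>
         int (vanishing_order w) \<le> 2 * \<lfloor>log 2 (real (length w))\<rfloor> + 2"
proof -
  define n where "n = length w"
  have n1: "n \<ge> 1" using assms n_def by (cases w) auto
  define f where "f = \<lfloor>log 2 (real n)\<rfloor>"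
  have f0: "f \<ge> 0" using n1 by (simp add: f_def)
  define k where "k = nat f + 1"
  have "log 2 (real n) < real_of_int f + 1" unfolding f_def by linarith
  then have "2 powr log 2 (real n) < 2 powr (real_of_int f + 1)" by simp
  then have "real n < 2 powr (real (nat f + 1))" using n1 f0 by (simp add: add.commute)
  then have "real n < 2 ^ k" unfolding k_def by (simp only: powr_realpow[of 2] of_nat_numeral)
  then have nk: "n < 2 ^ k" by (metis of_nat_less_iff of_nat_numeral of_nat_power)
  have "length ((rho ^^ (2*k)) w) \<le> n div 2^k" using iter n_def by simp
  also have "\<dots> = 0" using nk by simp
  finally have z: "(rho ^^ (2*k)) w = []" by simp
  have pos: "2*k > 0" unfolding k_def by simp
  have "vanishing_order w \<le> 2*k"
    unfolding vanishing_order_def by (rule Least_le) (use z pos in auto)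
  then have "int (vanishing_order w) \<le> 2 * f + 2" unfolding k_def using f0 by simp
  then show ?thesis using z pos f_def n_def by blast
qed

end
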